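(* Let $\mathcal{Y}\in\mathbb{R}^{n_1\times n_2\times n_3}$ have tubal rank at most $r$, let $\Phi=\phi\circ\mathrm{vec}$ with $\phi\in\mathbb{R}^{m\times n_1n_2n_3}$ of full row rank, $\Phi^{-1}$ its Moore–Penrose pseudo-inverse, and $\mathbf b=\Phi(\mathcal{Y})$. Run either version (LRAP4TS or ELRAP4TS) of the algorithm described in the context. Then for every iteration index $k\ge1$ reached by the algorithm, $$\|\mathcal{R}_k\|_F\le\Big(\sqrt{1-\tfrac{1}{\min(n_1,n_2)}}\Big)^{k-1}\,\|\Phi^{-1}(\mathbf b)\|_F .$$
   Context: Notation: t-product $*$, conjugate transpose ${}^*$ and t-SVD of third-order tensors as usual: the t-product multiplies frontal slices in the Fourier domain (DFT along the third mode); the t-SVD $\mathcal{A}=\mathcal{U}*\mathcal{S}*\mathcal{V}^*$ has $\mathcal{U},\mathcal{V}$ orthogonal and $\mathcal{S}$ f-diagonal (diagonal frontal slices), obtained from SVDs of the Fourier-domain slices with singular values in nonincreasing order. Tubal rank = number of nonzero singular tubes $\mathcal{S}(i,i,:)$. $\Phi^{-1}\Phi$ is the orthogonal projector of $\mathbb{R}^{n_1\times n_2\times n_3}$ onto the orthogonal complement of $\ker\Phi$, and $\Phi\Phi^{-1}$ is the identity on $\mathbb{R}^m$. Algorithm (integer $s\ge1$ given): set $\mathcal{R}_0=\Phi^{-1}\Phi(\mathcal{Y})$, $\mathcal{R}_1=\mathcal{R}_0$, $\mathcal{X}_0=0$, $\widehat{\mathcal{Y}}_0=0$. For $k=1,2,\dots,\lceil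 r/s\rceil$ (stop if $\mathcal{R}_k=0$): Step 1: compute the t-SVD $\mathcal{R}_k=\mathcal{U}_k*\mathcal{S}_k*\mathcal{V}_k^*$ and set $\mathcal{M}_{k,j}=\mathcal{U}_k(:,j,:)*\frac{\mathcal{S}_k(j,j,:)}{\|\mathcal{S}_k(j,j,:)\|_F}*\mathcal{V}_k(:,j,:)^*$, $j=1,\dots,s$. Step 2/3, standard version (LRAP4TS): let $\theta^k\in\mathbb{R}^{sk}$ minimize $\|\sum_{i=1}^k\sum_{j=1}^s\theta_{i,j}\Phi^{-1}\Phi(\mathcal{M}_{i,j})-\mathcal{R}_0\|_F^2$, set $\mathcal{X}_k=\sum_{i,j}\theta^k_{i,j}\Phi^{-1}\Phi(\mathcal{M}_{i,j})$. Economic version (ELRAP4TS): let $(\alpha_0^k,\dots,\alpha_s^k)\in\mathbb{R}^{s+1}$ minimize $\|\alpha_0\mathcal{X}_{k-1}+\sum_{j=1}^s\alpha_j\Phi^{-1}\Phi(\mathcal{M}_{k,j})-\mathcal{R}_0\|_F^2$, set $\mathcal{X}_k=\alpha_0^k\mathcal{X}_{k-1}+\sum_j\alpha_j^k\Phi^{-1}\Phi(\mathcal{M}_{k,j})$ and $\widehat{\mathcal{Y}}_k=\alpha_0^k\widehat{\mathcal{Y}}_{k-1}+\sum_j\alpha^k_j\mathcal{M}_{k,j}$. In both versions set $\mathcal{R}_{k+1}=\Phi^{-1}\Phi(\mathcal{Y})-\mathcal{X}_k$. Output: $\mathcal{M}(\theta^k)=\sum_{i,j}\theta^k_{i,j}\mathcal{M}_{i,j}$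 (standard) or $\widehat{\mathcal{Y}}_k$ (economic). *)

theory Defs
  imports Complex_Main
begin

text \<open>Third-order real tensors of size a x b x c are represented as functions
  nat => nat => nat => real (0-based indices) that vanish outside the index box.
  Matrices are nat => nat => real, vectors nat => real, again 0-based.\<close>

type_synonym tensor = "nat \<Rightarrow> nat \<Rightarrow> nat \<Rightarrow> real"
type_synonym rmat = "nat \<Rightarrow> nat \<Rightarrow> real"
type_synonym rvec = "nat \<Rightarrow> real"

definition is_tensor :: "nat \<Rightarrow> nat \<Rightarrow> nat \<Rightarrow> tensor \<Rightarrow> bool" where
  "is_tensor a b c X \<longleftrightarrow> (\<forall>i j l. \<not> (i < a \<and> j < b \<and> l < c) \<longrightarrow> X i j l = 0)"

definition zero_tensor :: tensor where
  "zero_tensor = (\<lambda>i j l. 0)"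

definition fro :: "nat \<Rightarrow> nat \<Rightarrow> nat \<Rightarrow> tensor \<Rightarrow> real" where
  "fro a b c X = sqrt (\<Sum>i<a. \<Sum>j<b. \<Sum>l<c. (X i j l)\<^sup>2)"

text \<open>t-product of A (a x b x d) and B (b x c x d): circular convolution of the frontal
  slices along the third mode, which is the same as slice-wise multiplication in the
  Fourier domain (Kilmer--Martin: A * B = fold (bcirc A . unfold B)).\<close>
definition tprod :: "nat \<Rightarrow> nat \<Rightarrow> nat \<Rightarrow> nat \<Rightarrow> tensor \<Rightarrow> tensor \<Rightarrow> tensor" where
  "tprod a b c d A B = (\<lambda>i j l. if i < a \<and> j < c \<and> l < d
      then (\<Sum>p<b. \<Sum>q<d. A i p q * B p j ((l + d - q) mod d)) else 0)"

text \<open>(Conjugate) transpose of a real a x b x c tensor: transpose every frontal slice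
  and reverse the order of frontal slices 2..c.\<close>
definition ctrans :: "nat \<Rightarrow> nat \<Rightarrow> nat \<Rightarrow> tensor \<Rightarrow> tensor" where
  "ctrans a b c A = (\<lambda>i j l. if i < b \<and> j < a \<and> l < c then A j i ((c - l) mod c) else 0)"

definition ident :: "nat \<Rightarrow> nat \<Rightarrow> tensor" where
  "ident a c = (\<lambda>i j l. if i < a \<and> i = j \<and> l = 0 \<and> 0 < c then 1 else 0)"

definition t_orthogonal :: "nat \<Rightarrow> nat \<Rightarrow> tensor \<Rightarrow> bool" where
  "t_orthogonal a c U \<longleftrightarrow>
     tprod a a a c (ctrans a a c U) U = ident a c \<and> tprod a a a c U (ctrans a a c U) = ident a c"

definition f_diagonal :: "tensor \<Rightarrow> bool" where
  "f_diagonal S \<longleftrightarrow> (\<forall>i j l. i \<noteq> j \<longrightarrow> S i j l = 0)"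

definition dft3 :: "nat \<Rightarrow> tensor \<Rightarrow> nat \<Rightarrow> nat \<Rightarrow> nat \<Rightarrow> complex" where
  "dft3 c X = (\<lambda>i j l. \<Sum>q<c. complex_of_real (X i j q) * cis (- 2 * pi * real l * real q / real c))"

text \<open>t-SVD  R = U * S * V^*  of an a x b x c tensor R: U, V orthogonal, S f-diagonal, and
  in the Fourier domain the diagonal entries of every frontal slice of S are the singular
  values of the corresponding slice of R, i.e. real, nonnegative and nonincreasing.\<close>
definition is_tsvd :: "nat \<Rightarrow> nat \<Rightarrow> nat \<Rightarrow> tensor \<Rightarrow> tensor \<Rightarrow> tensor \<Rightarrow> tensor \<Rightarrow> bool" where
  "is_tsvd a b c R U S V \<longleftrightarrow>
     is_tensor a a c U \<and> is_tensor a b c S \<and> is_tensor b b c V \<and>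
     t_orthogonal a c U \<and> t_orthogonal b c V \<and> f_diagonal S \<and>
     (\<forall>l<c. \<forall>j<min a b. Im (dft3 c S j j l) = 0 \<and> 0 \<le> Re (dft3 c S j j l)) \<and>
     (\<forall>l<c. \<forall>j. Suc j < min a b \<longrightarrow> Re (dft3 c S (Suc j) (Suc j) l) \<le> Re (dft3 c S j j l)) \<and>
     R = tprod a a b c U (tprod a b b c S (ctrans b b c V))"

definition tubal_rank_le :: "nat \<Rightarrow> nat \<Rightarrow> nat \<Rightarrow> tensor \<Rightarrow> nat \<Rightarrow> bool" where
  "tubal_rank_le a b c Y r \<longleftrightarrow>
     (\<exists>U S V. is_tsvd a b c Y U S V \<and> card {j. j < min a b \<and> (\<exists>l<c. S j j l \<noteq> 0)} \<le> r)"

text \<open>Building blocks of M_{k,j} (0-based j):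
  U(:,j,:) * (S(j,j,:)/||S(j,j,:)||_F) * V(:,j,:)^*.\<close>
definition lat_slice :: "tensor \<Rightarrow> nat \<Rightarrow> tensor" where
  "lat_slice U j = (\<lambda>i p l. if p = 0 then U i j l else 0)"

definition tube_norm :: "nat \<Rightarrow> tensor \<Rightarrow> nat \<Rightarrow> real" where
  "tube_norm c S j = sqrt (\<Sum>l<c. (S j j l)\<^sup>2)"

definition normalized_tube :: "nat \<Rightarrow> tensor \<Rightarrow> nat \<Rightarrow> tensor" where
  "normalized_tube c S j = (\<lambda>x y l. if x = 0 \<and> y = 0 \<and> l < c then S j j l / tube_norm c S j else 0)"

definition rank1_term :: "nat \<Rightarrow> nat \<Rightarrow> nat \<Rightarrow> tensor \<Rightarrow> tensor \<Rightarrow> tensor \<Rightarrow> nat \<Rightarrow> tensor" where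
  "rank1_term a b c U S V j =
     tprod a 1 b c (tprod a 1 1 c (lat_slice U j) (normalized_tube c S j)) (ctrans b 1 c (lat_slice V j))"

definition tvec :: "nat \<Rightarrow> nat \<Rightarrow> nat \<Rightarrow> tensor \<Rightarrow> rvec" where
  "tvec a b c X = (\<lambda>idx. if idx < a * b * c then X (idx mod a) ((idx div a) mod b) (idx div (a * b)) else 0)"

definition tunvec :: "nat \<Rightarrow> nat \<Rightarrow> nat \<Rightarrow> rvec \<Rightarrow> tensor" where
  "tunvec a b c v = (\<lambda>i j l. if i < a \<and> j < b \<and> l < c then v (i + a * j + a * b * l) else 0)"

definition mvmul :: "nat \<Rightarrow> nat \<Rightarrow> rmat \<Rightarrow> rvec \<Rightarrow> rvec" where
  "mvmul p q A v = (\<lambda>i. if i < p then (\<Sum>k<q. A i k * v k) else 0)"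

definition mmul :: "nat \<Rightarrow> nat \<Rightarrow> nat \<Rightarrow> rmat \<Rightarrow> rmat \<Rightarrow> rmat" where
  "mmul p q r A B = (\<lambda>i j. if i < p \<and> j < r then (\<Sum>k<q. A i k * B k j) else 0)"

definition is_matrix :: "nat \<Rightarrow> nat \<Rightarrow> rmat \<Rightarrow> bool" where
  "is_matrix p q A \<longleftrightarrow> (\<forall>i j. \<not> (i < p \<and> j < q) \<longrightarrow> A i j = 0)"

definition full_row_rank :: "nat \<Rightarrow> nat \<Rightarrow> rmat \<Rightarrow> bool" where
  "full_row_rank p q A \<longleftrightarrow>
     (\<forall>x::rvec. (\<forall>j<q. (\<Sum>i<p. x i * A i j) = 0) \<longrightarrow> (\<forall>i<p. x i = 0))"

definition is_mp_inverse :: "nat \<Rightarrow> nat \<Rightarrow> rmat \<Rightarrow> rmat \<Rightarrow> bool" where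
  "is_mp_inverse p q A B \<longleftrightarrow>
     is_matrix q p B \<and>
     mmul p p q (mmul p q p A B) A = A \<and>
     mmul q q p (mmul q p q B A) B = B \<and>
     (\<forall>i j. mmul p q p A B i j = mmul p q p A B j i) \<and>
     (\<forall>i j. mmul q p q B A i j = mmul q p q B A j i)"

definition Phi_op :: "nat \<Rightarrow> nat \<Rightarrow> nat \<Rightarrow> nat \<Rightarrow> rmat \<Rightarrow> tensor \<Rightarrow> rvec" where
  "Phi_op a b c m phi X = mvmul m (a * b * c) phi (tvec a b c X)"

definition Phi_inv_op :: "nat \<Rightarrow> nat \<Rightarrow> nat \<Rightarrow> nat \<Rightarrow> rmat \<Rightarrow> rvec \<Rightarrow> tensor" where
  "Phi_inv_op a b c m phiinv v = tunvec a b c (mvmul (a * b * c) m phiinv v)"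

definition proj_op :: "nat \<Rightarrow> nat \<Rightarrow> nat \<Rightarrow> nat \<Rightarrow> rmat \<Rightarrow> rmat \<Rightarrow> tensor \<Rightarrow> tensor" where
  "proj_op a b c m phi phiinv X = Phi_inv_op a b c m phiinv (Phi_op a b c m phi X)"

text \<open>Standard version (LRAP4TS), steps 2/3 of iteration k: theta k minimises the
  least-squares functional over all coefficient vectors in R^{sk}, X_k is the fit,
  R_{k+1} = Phi^{-1}Phi(Y) - X_k.  Here M i j is M_{i,j} (i = 1..k, j = 0..s-1).\<close>
definition std_comb :: "nat \<Rightarrow> nat \<Rightarrow> (tensor \<Rightarrow> tensor) \<Rightarrow> (nat \<Rightarrow> nat \<Rightarrow> tensor)
     \<Rightarrow> (nat \<Rightarrow> nat \<Rightarrow> real) \<Rightarrow> tensor" where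
  "std_comb k s P M th = (\<lambda>x y z. \<Sum>i\<in>{1..k}. \<Sum>j<s. th i j * P (M i j) x y z)"

definition econ_comb :: "nat \<Rightarrow> (tensor \<Rightarrow> tensor) \<Rightarrow> tensor \<Rightarrow> (nat \<Rightarrow> tensor)
     \<Rightarrow> (nat \<Rightarrow> real) \<Rightarrow> tensor" where
  "econ_comb s P Xprev Mk al = (\<lambda>x y z. al 0 * Xprev x y z + (\<Sum>j<s. al (Suc j) * P (Mk j) x y z))"

definition tdiff :: "tensor \<Rightarrow> tensor \<Rightarrow> tensor" where
  "tdiff A B = (\<lambda>x y z. A x y z - B x y z)"

text \<open>A run of N iterations (k = 1..N) of LRAP4TS (econ = False) or ELRAP4TS (econ = True).\<close>
definition lrap_run ::
  "bool \<Rightarrow> nat \<Rightarrow> nat \<Rightarrow> nat \<Rightarrow> nat \<Rightarrow> rmat \<Rightarrow> rmat \<Rightarrow> tensor \<Rightarrow> nat \<Rightarrow> nat \<Rightarrow>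
   (nat \<Rightarrow> tensor) \<Rightarrow> (nat \<Rightarrow> tensor) \<Rightarrow> (nat \<Rightarrow> tensor) \<Rightarrow> (nat \<Rightarrow> tensor) \<Rightarrow> (nat \<Rightarrow> tensor) \<Rightarrow>
   (nat \<Rightarrow> nat \<Rightarrow> nat \<Rightarrow> real) \<Rightarrow> (nat \<Rightarrow> nat \<Rightarrow> real) \<Rightarrow> bool" where
  "lrap_run econ n1 n2 n3 m phi phiinv Y s N R X U S V th al \<longleftrightarrow>
    (let P = proj_op n1 n2 n3 m phi phiinv;
         R0 = P Y;
         M = (\<lambda>i j. rank1_term n1 n2 n3 (U i) (S i) (V i) j)
     in R 1 = R0 \<and> X 0 = zero_tensor \<and>
        (\<forall>k. 1 \<le> k \<and> k \<le> N \<longrightarrow>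
           R k \<noteq> zero_tensor \<and>
           is_tsvd n1 n2 n3 (R k) (U k) (S k) (V k) \<and>
           (if econ then
              X k = econ_comb s P (X (k - 1)) (M k) (al k) \<and>
              (\<forall>al'. (fro n1 n2 n3 (tdiff (X k) R0))\<^sup>2
                        \<le> (fro n1 n2 n3 (tdiff (econ_comb s P (X (k - 1)) (M k) al') R0))\<^sup>2)
            else
              X k = std_comb k s P M (th k) \<and>
              (\<forall>th'. (fro n1 n2 n3 (tdiff (X k) R0))\<^sup>2
                        \<le> (fro n1 n2 n3 (tdiff (std_comb k s P M th') R0))\<^sup>2)) \<and>
           R (Suc k) = tdiff R0 (X k)))"

end

theory Submission
  imports Defs
begin

lemma nat_mod_eqI: "x < (c::nat) \<Longrightarrow> y < c \<Longrightarrow> int x mod int c = int y mod int c \<Longrightarrow> x = y"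
  by (metis mod_less of_nat_eq_iff zmod_int)
lemma cs_int: "q < (c::nat) \<Longrightarrow> int ((l + c - q) mod c) = (int l - int q) mod int c"
proof -
  assume "q < c"
  then have e: "int (l + c - q) = int l - int q + int c" by simp
  have "int ((l + c - q) mod c) = int (l + c - q) mod int c" by (rule zmod_int)
  also have "\<dots> = (int l - int q) mod int c" unfolding e by simp
  finally show ?thesis .
qed
lemma neg_int: "q < (c::nat) \<Longrightarrow> int ((c - q) mod c) = (- int q) mod int c"
  using cs_int[of q c 0] by simp

lemma ma: "q < (c::nat) \<Longrightarrow> q' < c \<Longrightarrow> ((q' + q) mod c + c - q) mod c = q'"
  apply (rule nat_mod_eqI[where c=c]) apply simp apply simp
  apply (subst cs_int, simp)+ apply (simp add: zmod_int mod_simps algebra_simps) done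
lemma mb: "q < (c::nat) \<Longrightarrow> q'' < c \<Longrightarrow> ((q'' + c - q) mod c + q) mod c = q''"
  apply (rule nat_mod_eqI[where c=c]) apply simp apply simp
  apply (simp add: zmod_int) apply (simp add: mod_simps algebra_simps) done
lemma mc: "q < (c::nat) \<Longrightarrow> q' < c \<Longrightarrow> l < c \<Longrightarrow>
  (l + c - (q' + q) mod c) mod c = ((l + c - q) mod c + c - q') mod c"
  apply (rule nat_mod_eqI[where c=c]) apply simp apply simp
  apply (subst cs_int, simp)+ apply (simp add: zmod_int mod_simps algebra_simps) done
lemma md: "q < (c::nat) \<Longrightarrow> (c - (c - q) mod c) mod c = q"
  apply (rule nat_mod_eqI[where c=c]) apply simp apply simp
  apply (subst neg_int, simp)+ apply (simp add: zmod_int mod_simps algebra_simps) done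
lemma me: "q < (c::nat) \<Longrightarrow> l < c \<Longrightarrow> ((l + c - q) mod c + c - (c - q) mod c) mod c = l"
  apply (rule nat_mod_eqI[where c=c]) apply simp apply simp
  apply (subst cs_int, simp)+ apply (subst neg_int, simp)+ apply (simp add: zmod_int mod_simps algebra_simps) done
lemma mf: "q < (c::nat) \<Longrightarrow> l < c \<Longrightarrow> (c - (l + c - q) mod c) mod c = (q + c - l) mod c"
  apply (rule nat_mod_eqI[where c=c]) apply simp apply simp
  apply (subst neg_int, simp) apply (subst cs_int, simp)+ apply (simp add: zmod_int mod_simps algebra_simps) done
lemma mh: "q < (c::nat) \<Longrightarrow> l < c \<Longrightarrow> ((l + c - q) mod c = 0) \<longleftrightarrow> q = l"
proof
  assume a: "q < c" "l < c" "(l + c - q) mod c = 0"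
  show "q = l"
  proof (rule nat_mod_eqI[where c=c])
    have "int ((l + c - q) mod c) = 0" using a by simp
    then have "(int l - int q) mod int c = 0" using cs_int[OF a(1)] by simp
    then show "int q mod int c = int l mod int c" by (simp add: mod_eq_dvd_iff mod_eq_0_iff_dvd dvd_diff_commute)
  qed (use a in auto)
qed simp
lemma mg: "l < (c::nat) \<Longrightarrow> (l + c - 0) mod c = l" by simp
lemma tprod_assoc:
  assumes d: "0 < d"
  shows "tprod a b c d A (tprod b e c d B C) = tprod a e c d (tprod a b e d A B) C"
proof (intro ext)
  fix i j l
  show "tprod a b c d A (tprod b e c d B C) i j l = tprod a e c d (tprod a b e d A B) C i j l"
  proof (cases "i < a \<and> j < c \<and> l < d")
    case False then show ?thesis by (auto simp add: tprod_def)
  next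
    case True
    then have l: "l < d" by simp
    have "tprod a b c d A (tprod b e c d B C) i j l =
      (\<Sum>p<b. \<Sum>q<d. A i p q * (\<Sum>p'<e. \<Sum>q'<d. B p p' q' * C p' j ((((l + d - q) mod d) + d - q') mod d)))"
      using True d by (simp add: tprod_def)
    also have "\<dots> = (\<Sum>(p,q,p',q')\<in>{..<b}\<times>{..<d}\<times>{..<e}\<times>{..<d}. A i p q * B p p' q' * C p' j ((((l + d - q) mod d) + d - q') mod d))"
      by (simp add: sum.cartesian_product sum_distrib_left mult.assoc) (rule sum.cong[OF refl], auto)
    also have "\<dots> = (\<Sum>(p',q'',p,q)\<in>{..<e}\<times>{..<d}\<times>{..<b}\<times>{..<d}. A i p q * B p p' ((q'' + d - q) mod d) * C p' j ((l + d - q'') mod d))"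
      apply (rule sum.reindex_bij_witness[where j = "\<lambda>(p,q,p',q'). (p', (q'+q) mod d, p, q)"
                                             and i = "\<lambda>(p',q'',p,q). (p, q, p', (q'' + d - q) mod d)"])
      using d l by (auto simp: ma mb mc)
    also have "\<dots> = tprod a e c d (tprod a b e d A B) C i j l"
      using True d by (simp add: tprod_def sum.cartesian_product sum_distrib_right mult.assoc) (rule sum.cong[OF refl], auto)
    finally show ?thesis .
  qed
qed


definition tip :: "nat \<Rightarrow> nat \<Rightarrow> nat \<Rightarrow> tensor \<Rightarrow> tensor \<Rightarrow> real" where
  "tip a b c X Z = (\<Sum>i<a. \<Sum>j<b. \<Sum>l<c. X i j l * Z i j l)"

lemma tprod_adj_left:
  assumes d: "0 < d"
  shows "tip a c d (tprod a b c d A B) C = tip b c d B (tprod b a c d (ctrans a b d A) C)"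
proof -
  have "tip a c d (tprod a b c d A B) C =
     (\<Sum>(i,j,l,p,q)\<in>{..<a}\<times>{..<c}\<times>{..<d}\<times>{..<b}\<times>{..<d}. A i p q * B p j ((l + d - q) mod d) * C i j l)"
    by (simp add: tip_def tprod_def sum.cartesian_product sum_distrib_right mult.assoc) (rule sum.cong[OF refl], auto)
  also have "\<dots> = (\<Sum>(p,j,l',i,q')\<in>{..<b}\<times>{..<c}\<times>{..<d}\<times>{..<a}\<times>{..<d}. B p j l' * (A i p ((d - q') mod d) * C i j ((l' + d - q') mod d)))"
    apply (rule sum.reindex_bij_witness[where j = "\<lambda>(i,j,l,p,q). (p,j,(l + d - q) mod d,i,(d - q) mod d)"
                                           and i = "\<lambda>(p,j,l',i,q'). (i,j,(l' + d - q') mod d, p, (d - q') mod d)"])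
    using d by (clarsimp simp: md me)+
  also have "\<dots> = tip b c d B (tprod b a c d (ctrans a b d A) C)"
    using d by (simp add: tip_def tprod_def ctrans_def sum.cartesian_product sum_distrib_left mult.assoc) (rule sum.cong[OF refl], auto)
  finally show ?thesis .
qed

lemma tprod_adj_right:
  assumes d: "0 < d"
  shows "tip a c d C (tprod a b c d A B) = tip a b d (tprod a c b d C (ctrans b c d B)) A"
proof -
  have "tip a c d C (tprod a b c d A B) =
     (\<Sum>(i,j,l,p,q)\<in>{..<a}\<times>{..<c}\<times>{..<d}\<times>{..<b}\<times>{..<d}. C i j l * (A i p q * B p j ((l + d - q) mod d)))"
    by (simp add: tip_def tprod_def sum.cartesian_product sum_distrib_left mult.assoc) (rule sum.cong[OF refl], auto)
  also have "\<dots> = (\<Sum>(i,p,q,j,l)\<in>{..<a}\<times>{..<b}\<times>{..<d}\<times>{..<c}\<times>{..<d}. C i j l * B p j ((l + d - q) mod d) * A i p q)"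
    apply (rule sum.reindex_bij_witness[where j = "\<lambda>(i,j,l,p,q). (i,p,q,j,l)"
                                           and i = "\<lambda>(i,p,q,j,l). (i,j,l,p,q)"])
    by force+
  also have "\<dots> = tip a b d (tprod a c b d C (ctrans b c d B)) A"
    using d by (simp add: tip_def tprod_def ctrans_def sum.cartesian_product sum_distrib_right mult.assoc mf) (rule sum.cong[OF refl], auto simp: mf)
  finally show ?thesis .
qed

lemma ctrans_ctrans:
  assumes "is_tensor a b c A" "0 < c"
  shows "ctrans b a c (ctrans a b c A) = A"
  using assms by (auto simp: ctrans_def is_tensor_def md fun_eq_iff)

lemma sum2_delta: "i < (a::nat) \<Longrightarrow> q0 < (c::nat) \<Longrightarrow> (\<Sum>p<a. \<Sum>q<c. if p = i \<and> q = q0 then f p q else 0) = (f i q0 :: real)"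
proof -
  assume a: "i < a" "q0 < c"
  have "(\<Sum>p<a. \<Sum>q<c. if p = i \<and> q = q0 then f p q else 0) = (\<Sum>p<a. if p = i then f p q0 else 0)"
    using a by (intro sum.cong refl) (auto simp: if_distrib sum.delta')
  also have "\<dots> = f i q0" using a by simp
  finally show ?thesis .
qed
lemma sum2_delta': "i < (a::nat) \<Longrightarrow> q0 < (c::nat) \<Longrightarrow> (\<Sum>p<a. \<Sum>q<c. if i = p \<and> q = q0 then f p q else 0) = (f i q0 :: real)"
  using sum2_delta[of i a q0 c f] by (simp add: eq_commute[of i])

lemma tprod_ident_left:
  assumes "is_tensor a b c B" "0 < c"
  shows "tprod a a b c (ident a c) B = B"
proof (intro ext)
  fix i j l
  show "tprod a a b c (ident a c) B i j l = B i j l"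
    using assms by (auto simp: tprod_def ident_def is_tensor_def if_distrib[where f="\<lambda>x. x * _"] sum2_delta' cong: if_cong)
qed

lemma tprod_ident_right:
  assumes "is_tensor a b c A" "0 < c"
  shows "tprod a b b c A (ident b c) = A"
proof (intro ext)
  fix i j l
  show "tprod a b b c A (ident b c) i j l = A i j l"
  proof (cases "i < a \<and> j < b \<and> l < c")
    case False then show ?thesis using assms by (auto simp: tprod_def is_tensor_def)
  next
    case True
    have "tprod a b b c A (ident b c) i j l = (\<Sum>p<b. \<Sum>q<c. if p = j \<and> q = l then A i p q else 0)"
      using True assms by (auto simp: tprod_def ident_def mh intro!: sum.cong)
    also have "\<dots> = A i j l" using True by (simp add: sum2_delta)
    finally show ?thesis .
  qed
qed



lemma tprod_is_tensor: "is_tensor a c d (tprod a b c d A B)"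
  by (simp add: is_tensor_def tprod_def)
lemma ctrans_is_tensor: "is_tensor b a c (ctrans a b c A)"
  by (simp add: is_tensor_def ctrans_def)
lemma lat_slice_is_tensor: "is_tensor a b c W \<Longrightarrow> 0 < b \<Longrightarrow> is_tensor a 1 c (lat_slice W 0)"
  by (auto simp: is_tensor_def lat_slice_def)

lemma norm_pres_left:
  assumes c: "0 < c" and U: "t_orthogonal a c U" and Z: "is_tensor a b c Z"
  shows "tip a b c (tprod a a b c U Z) (tprod a a b c U Z) = tip a b c Z Z"
proof -
  have h1: "tip a b c (tprod a a b c U Z) (tprod a a b c U Z)
      = tip a b c Z (tprod a a b c (ctrans a a c U) (tprod a a b c U Z))"
    by (rule tprod_adj_left[OF c])
  have h2: "tprod a a b c (ctrans a a c U) (tprod a a b c U Z) = tprod a a b c (tprod a a a c (ctrans a a c U) U) Z"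
    by (rule tprod_assoc[OF c])
  have h3: "tprod a a b c (tprod a a a c (ctrans a a c U) U) Z = Z" using U Z c by (simp add: t_orthogonal_def tprod_ident_left)
  show ?thesis unfolding h1 h2 h3 by (rule refl)
qed

lemma norm_pres_right:
  assumes c: "0 < c" and V: "t_orthogonal b c V" "is_tensor b b c V" and S: "is_tensor a b c S"
  shows "tip a b c (tprod a b b c S (ctrans b b c V)) (tprod a b b c S (ctrans b b c V)) = tip a b c S S"
proof -
  have h1: "tip a b c (tprod a b b c S (ctrans b b c V)) (tprod a b b c S (ctrans b b c V))
     = tip a b c (tprod a b b c (tprod a b b c S (ctrans b b c V)) (ctrans b b c (ctrans b b c V))) S"
    by (rule tprod_adj_right[OF c])
  have h2: "ctrans b b c (ctrans b b c V) = V" using V c by (simp add: ctrans_ctrans)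
  have h3: "tprod a b b c (tprod a b b c S (ctrans b b c V)) V = tprod a b b c S (tprod b b b c (ctrans b b c V) V)"
    by (rule tprod_assoc[OF c, symmetric])
  have h4: "tprod a b b c S (tprod b b b c (ctrans b b c V) V) = S" using V S c by (simp add: t_orthogonal_def tprod_ident_right)
  show ?thesis unfolding h1 h2 h3 h4 by (rule refl)
qed

lemma tip_fdiag:
  assumes "f_diagonal S"
  shows "tip a b c S S = (\<Sum>j<min a b. \<Sum>l<c. (S j j l)\<^sup>2)"
proof -
  have "\<And>i j. (\<Sum>l<c. S i j l * S i j l) = (if i = j then (\<Sum>l<c. (S i i l)\<^sup>2) else 0)"
    using assms by (auto simp: f_diagonal_def power2_eq_square)
  then have "tip a b c S S = (\<Sum>i<a. \<Sum>j<b. if i = j then (\<Sum>l<c. (S i i l)\<^sup>2) else 0)"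
    by (simp add: tip_def)
  also have "\<dots> = (\<Sum>i<a. if i < b then (\<Sum>l<c. (S i i l)\<^sup>2) else 0)"
    by (simp add: sum.delta')
  also have "\<dots> = (\<Sum>i\<in>{..<a} \<inter> {..<b}. (\<Sum>l<c. (S i i l)\<^sup>2))"
    by (simp add: sum.inter_restrict)
  also have "{..<a} \<inter> {..<b} = {..<min a b}" by auto
  finally show ?thesis .
qed

lemma lat_slice_orth:
  assumes a: "0 < a" and c: "0 < c" and W: "t_orthogonal a c W"
  shows "tprod p a 1 c A (lat_slice W 0) = (\<lambda>i j l. if j = 0 then tprod p a a c A W i 0 l else 0)"
  using a c by (auto simp: tprod_def lat_slice_def fun_eq_iff)

lemma E_left:
  assumes a: "0 < a" and c: "0 < c" and W: "t_orthogonal a c W"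
  shows "tprod a a 1 c (ctrans a a c W) (lat_slice W 0) = (\<lambda>i j l. if i = 0 \<and> j = 0 \<and> l = 0 then 1 else 0)"
proof -
  have e: "tprod a a a c (ctrans a a c W) W = ident a c" using W by (simp add: t_orthogonal_def)
  have "tprod a a 1 c (ctrans a a c W) (lat_slice W 0) = (\<lambda>i j l. if j = 0 then tprod a a a c (ctrans a a c W) W i 0 l else 0)"
    by (rule lat_slice_orth[OF a c W])
  then show ?thesis
    using a c e by (auto simp: ident_def fun_eq_iff)
qed

lemma E_small:
  assumes a: "0 < a" and c: "0 < c" and W: "t_orthogonal a c W"
  shows "tprod 1 a 1 c (ctrans a 1 c (lat_slice W 0)) (lat_slice W 0) = ident 1 c"
proof -
  have e: "tprod a a a c (ctrans a a c W) W = ident a c" using W by (simp add: t_orthogonal_def)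
  have "tprod 1 a 1 c (ctrans a 1 c (lat_slice W 0)) (lat_slice W 0) i j l = ident 1 c i j l" for i j l
  proof -
    have "tprod 1 a 1 c (ctrans a 1 c (lat_slice W 0)) (lat_slice W 0) i j l
        = (if i = 0 \<and> j = 0 then tprod a a a c (ctrans a a c W) W 0 0 l else 0)"
      using a c by (auto simp: tprod_def lat_slice_def ctrans_def intro!: sum.cong)
    then show ?thesis using e a by (simp add: ident_def)
  qed
  then show ?thesis by (intro ext)
qed



lemma if_one_mult: "(if P then (1::real) else 0) * x = (if P then x else 0)" by simp

lemma inner_M:
  assumes a: "0 < a" and b: "0 < b" and c: "0 < c"
    and sv: "is_tsvd a b c R U S V"
  shows "tip a b c R (rank1_term a b c U S V 0) = tube_norm c S 0"
proof -
  from sv have U: "is_tensor a a c U" "t_orthogonal a c U" and S: "is_tensor a b c S"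
    and V: "is_tensor b b c V" "t_orthogonal b c V"
    and R: "R = tprod a a b c U (tprod a b b c S (ctrans b b c V))"
    by (auto simp: is_tsvd_def)
  define U0 where "U0 = lat_slice U 0"
  define V0 where "V0 = lat_slice V 0"
  define tn where "tn = normalized_tube c S 0"
  define Z where "Z = tprod a b b c S (ctrans b b c V)"
  define T where "T = tprod a 1 1 c (tprod a a 1 c (ctrans a a c U) U0) tn"
  have M: "rank1_term a b c U S V 0 = tprod a 1 b c (tprod a 1 1 c U0 tn) (ctrans b 1 c V0)"
    by (simp add: rank1_term_def U0_def V0_def tn_def)
  define Ea :: tensor where "Ea = (\<lambda>i j l. if i = 0 \<and> j = 0 \<and> l = 0 then 1 else 0)"
  define V0T where "V0T = ctrans b 1 c V0"
  define Y where "Y = tprod a 1 1 c U0 tn"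
  have h1: "tip a b c R (rank1_term a b c U S V 0) = tip a b c Z (tprod a a b c (ctrans a a c U) (tprod a 1 b c Y V0T))"
    unfolding R M Z_def Y_def V0T_def by (rule tprod_adj_left[OF c])
  have h2: "tprod a a b c (ctrans a a c U) (tprod a 1 b c Y V0T) = tprod a 1 b c (tprod a a 1 c (ctrans a a c U) Y) V0T"
    by (rule tprod_assoc[OF c])
  have h3: "tprod a a 1 c (ctrans a a c U) Y = tprod a 1 1 c (tprod a a 1 c (ctrans a a c U) U0) tn"
    unfolding Y_def by (rule tprod_assoc[OF c])
  have h4: "tprod a a 1 c (ctrans a a c U) U0 = Ea"
    unfolding U0_def Ea_def by (rule E_left[OF a c U(2)])
  have h5: "tip a b c Z (tprod a 1 b c (tprod a 1 1 c Ea tn) V0T) = tip a 1 c (tprod a b 1 c Z (ctrans 1 b c V0T)) (tprod a 1 1 c Ea tn)"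
    by (rule tprod_adj_right[OF c])
  have h6: "ctrans 1 b c V0T = V0"
    unfolding V0_def V0T_def by (rule ctrans_ctrans[OF lat_slice_is_tensor[OF V(1) b] c])
  have h7: "tprod a b 1 c Z V0 = tprod a b 1 c S (tprod b b 1 c (ctrans b b c V) V0)"
    unfolding Z_def by (rule tprod_assoc[OF c, symmetric])
  have h8: "tprod b b 1 c (ctrans b b c V) V0 = Ea"
    unfolding V0_def Ea_def by (rule E_left[OF b c V(2)])
  have eq: "tip a b c R (rank1_term a b c U S V 0) = tip a 1 c (tprod a b 1 c S Ea) (tprod a 1 1 c Ea tn)"
    unfolding h1 h2 h3 h4 h5 h6 h7 h8 by (rule refl)
  note eq = eq[unfolded Ea_def]
  have e1: "tprod a b 1 c S (\<lambda>i j l. if i = 0 \<and> j = 0 \<and> l = 0 then 1 else 0) i 0 l = S i 0 l"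
    if "i < a" "l < c" for i l
  proof -
    have "tprod a b 1 c S (\<lambda>i j l. if i = 0 \<and> j = 0 \<and> l = 0 then 1 else 0) i 0 l
        = (\<Sum>p<b. \<Sum>q<c. if p = 0 \<and> q = l then S i p q else 0)"
      using that b c by (auto simp: tprod_def mh intro!: sum.cong)
    also have "\<dots> = S i 0 l" using b that by (simp add: sum2_delta)
    finally show ?thesis .
  qed
  have e2: "tprod a 1 1 c (\<lambda>i j l. if i = 0 \<and> j = 0 \<and> l = 0 then 1 else 0) tn i 0 l = (if i = 0 then tn 0 0 l else 0)"
    if "i < a" "l < c" for i l
  proof -
    have "tprod a 1 1 c (\<lambda>i j l. if i = 0 \<and> j = 0 \<and> l = 0 then 1 else 0) tn i 0 l
        = (if i = 0 then (\<Sum>q<c. if q = 0 then tn 0 0 ((l + c - q) mod c) else 0) else 0)"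
      using that c by (auto simp: tprod_def if_one_mult intro!: sum.cong)
    also have "\<dots> = (if i = 0 then tn 0 0 l else 0)" using c that by simp
    finally show ?thesis .
  qed
  have "tip a 1 c (tprod a b 1 c S (\<lambda>i j l. if i = 0 \<and> j = 0 \<and> l = 0 then 1 else 0))
        (tprod a 1 1 c (\<lambda>i j l. if i = 0 \<and> j = 0 \<and> l = 0 then 1 else 0) tn)
      = (\<Sum>i<a. \<Sum>l<c. tprod a b 1 c S (\<lambda>i j l. if i = 0 \<and> j = 0 \<and> l = 0 then 1 else 0) i 0 l *
            tprod a 1 1 c (\<lambda>i j l. if i = 0 \<and> j = 0 \<and> l = 0 then 1 else 0) tn i 0 l)"
    by (simp add: tip_def)
  also have "\<dots> = (\<Sum>i<a. \<Sum>l<c. S i 0 l * (if i = 0 then tn 0 0 l else 0))"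
    by (intro sum.cong refl) (simp add: e1 e2 del: One_nat_def)
  also have "\<dots> = (\<Sum>i<a. if i = 0 then (\<Sum>l<c. S 0 0 l * tn 0 0 l) else 0)"
    by (intro sum.cong refl) auto
  also have "\<dots> = (\<Sum>l<c. S 0 0 l * tn 0 0 l)" using a by simp
  also have "\<dots> = (\<Sum>l<c. (S 0 0 l)\<^sup>2) / tube_norm c S 0"
    by (simp add: tn_def normalized_tube_def sum_divide_distrib power2_eq_square)
  also have "\<dots> = tube_norm c S 0"
  proof (cases "tube_norm c S 0 = 0")
    case True then show ?thesis by simp
  next
    case False
    have "(tube_norm c S 0)\<^sup>2 = (\<Sum>l<c. (S 0 0 l)\<^sup>2)"
      unfolding tube_norm_def by (simp add: sum_nonneg)
    with False show ?thesis by (metis nonzero_mult_div_cancel_left power2_eq_square)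
  qed
  finally show ?thesis using eq by simp
qed

lemma norm_M:
  assumes a: "0 < a" and b: "0 < b" and c: "0 < c"
    and sv: "is_tsvd a b c R U S V"
  shows "tip a b c (rank1_term a b c U S V 0) (rank1_term a b c U S V 0) \<le> 1"
proof -
  from sv have U: "is_tensor a a c U" "t_orthogonal a c U" and S: "is_tensor a b c S"
    and V: "is_tensor b b c V" "t_orthogonal b c V"
    by (auto simp: is_tsvd_def)
  define U0 where "U0 = lat_slice U 0"
  define V0 where "V0 = lat_slice V 0"
  define tn where "tn = normalized_tube c S 0"
  define W where "W = tprod 1 1 b c tn (ctrans b 1 c V0)"
  have M: "rank1_term a b c U S V 0 = tprod a 1 b c U0 W"
    unfolding rank1_term_def U0_def V0_def tn_def W_def by (rule tprod_assoc[OF c, symmetric])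
  have h1: "tip a b c (tprod a 1 b c U0 W) (tprod a 1 b c U0 W) = tip 1 b c W (tprod 1 a b c (ctrans a 1 c U0) (tprod a 1 b c U0 W))"
    by (rule tprod_adj_left[OF c])
  have h2: "tprod 1 a b c (ctrans a 1 c U0) (tprod a 1 b c U0 W) = tprod 1 1 b c (tprod 1 a 1 c (ctrans a 1 c U0) U0) W"
    by (rule tprod_assoc[OF c])
  have h3: "tprod 1 a 1 c (ctrans a 1 c U0) U0 = ident 1 c"
    unfolding U0_def by (rule E_small[OF a c U(2)])
  have h4: "tprod 1 1 b c (ident 1 c) W = W"
    by (rule tprod_ident_left[OF _ c]) (simp add: W_def tprod_is_tensor)
  have h5: "tip 1 b c W W = tip 1 1 c (tprod 1 b 1 c W (ctrans 1 b c (ctrans b 1 c V0))) tn"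
    unfolding W_def by (rule tprod_adj_right[OF c])
  have h6: "ctrans 1 b c (ctrans b 1 c V0) = V0"
    unfolding V0_def by (rule ctrans_ctrans[OF lat_slice_is_tensor[OF V(1) b] c])
  have h7: "tprod 1 b 1 c W V0 = tprod 1 1 1 c tn (tprod 1 b 1 c (ctrans b 1 c V0) V0)"
    unfolding W_def by (rule tprod_assoc[OF c, symmetric])
  have h8: "tprod 1 b 1 c (ctrans b 1 c V0) V0 = ident 1 c"
    unfolding V0_def by (rule E_small[OF b c V(2)])
  have h9: "tprod 1 1 1 c tn (ident 1 c) = tn"
    by (rule tprod_ident_right[OF _ c]) (auto simp: tn_def normalized_tube_def is_tensor_def)
  have "tip a b c (tprod a 1 b c U0 W) (tprod a 1 b c U0 W) = tip 1 1 c tn tn"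
    unfolding h1 h2 h3 h4 h5 h6 h7 h8 h9 by (rule refl)
  also have "tip 1 1 c tn tn = (\<Sum>l<c. (S 0 0 l)\<^sup>2) / (tube_norm c S 0)\<^sup>2"
    by (simp add: tip_def tn_def normalized_tube_def sum_divide_distrib power2_eq_square)
  also have "\<dots> \<le> 1"
  proof (cases "tube_norm c S 0 = 0")
    case True then show ?thesis by simp
  next
    case False
    have "(tube_norm c S 0)\<^sup>2 = (\<Sum>l<c. (S 0 0 l)\<^sup>2)"
      unfolding tube_norm_def by (simp add: sum_nonneg)
    with False show ?thesis by simp
  qed
  finally show ?thesis using M by simp
qed



lemma swap3: "(\<Sum>l\<in>A. \<Sum>q\<in>B. \<Sum>q'\<in>C. F l q q') = (\<Sum>q\<in>B. \<Sum>q'\<in>C. \<Sum>l\<in>A. F l q q')"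
proof -
  have "(\<Sum>l\<in>A. \<Sum>q\<in>B. \<Sum>q'\<in>C. F l q q') = (\<Sum>q\<in>B. \<Sum>l\<in>A. \<Sum>q'\<in>C. F l q q')" by (rule sum.swap)
  also have "\<dots> = (\<Sum>q\<in>B. \<Sum>q'\<in>C. \<Sum>l\<in>A. F l q q')" by (rule sum.cong[OF refl], rule sum.swap)
  finally show ?thesis .
qed

lemma idx_facts:
  fixes a b c i j l :: nat
  assumes "i < a" "j < b" "l < c"
  shows "i + a * j + a * b * l < a * b * c"
    and "(i + a * j + a * b * l) mod a = i"
    and "((i + a * j + a * b * l) div a) mod b = j"
    and "(i + a * j + a * b * l) div (a * b) = l"
proof -
  have a0: "0 < a" and b0: "0 < b" using assms by auto
  have ij: "i + a * j < a * b"
  proof -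
    have "i + a * j < a * (j + 1)" using assms by simp
    also have "\<dots> \<le> a * b" using assms by (intro mult_le_mono2) simp
    finally show ?thesis .
  qed
  have "i + a * j + a * b * l < a * b * (l + 1)" using ij by (simp add: algebra_simps)
  also have "\<dots> \<le> a * b * c" using assms by (intro mult_le_mono2) simp
  finally show "i + a * j + a * b * l < a * b * c" .
  have e1: "i + a * j + a * b * l = i + a * (j + b * l)" by (simp add: algebra_simps)
  have m1: "(i + a * (j + b * l)) mod a = i" using assms by simp
  show "(i + a * j + a * b * l) mod a = i" using m1 by (simp only: e1)
  have d1: "(i + a * (j + b * l)) div a = j + b * l" using assms by simp
  have "(i + a * j + a * b * l) div a = j + b * l" using d1 by (simp only: e1)
  then show "((i + a * j + a * b * l) div a) mod b = j" using assms by simp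
  have e2: "i + a * j + a * b * l = (i + a * j) + (a * b) * l" by simp
  have ab: "a * b \<noteq> 0"
  proof
    assume "a * b = 0" with ij show False by simp
  qed
  have d0: "((i + a * j) + (a * b) * l) div (a * b) = l + (i + a * j) div (a * b)"
    by (rule div_mult_self2[OF ab])
  have z: "(i + a * j) div (a * b) = 0" by (rule div_less[OF ij])
  have d2: "((i + a * j) + (a * b) * l) div (a * b) = l" using d0 unfolding z by (simp only: add_0_right)
  show "(i + a * j + a * b * l) div (a * b) = l" by (rule d2)
qed

lemma idx_inv:
  fixes a b t :: nat
  shows "t mod a + a * ((t div a) mod b) + a * b * (t div (a * b)) = t"
proof -
  have "t div (a * b) = (t div a) div b" by (simp add: div_mult2_eq)
  then have "a * ((t div a) mod b) + a * b * (t div (a * b)) = a * (t div a)"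
    by (metis add_mult_distrib2 mult.assoc mod_mult_div_eq)
  then show ?thesis by (metis add.assoc mod_mult_div_eq)
qed

lemma idx_range:
  fixes a b c t :: nat
  assumes "t < a * b * c"
  shows "t mod a < a" "(t div a) mod b < b" "t div (a * b) < c"
proof -
  have a: "0 < a" using assms by (metis mult_0 not_less_zero neq0_conv)
  have b: "0 < b" using assms by (metis mult_0 mult_0_right not_less_zero neq0_conv)
  show "t mod a < a" using a by simp
  show "(t div a) mod b < b" using b by simp
  have "t < c * (a * b)" using assms by (simp add: mult.commute mult.left_commute)
  then show "t div (a * b) < c" by (rule less_mult_imp_div_less)
qed

lemma idx_small: "i < (a::nat) \<Longrightarrow> j < b \<Longrightarrow> (i + a * j) div (a * b) = 0"
  using idx_facts(4)[of i a j b 0 1] by simp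

lemma tvec_idx: "i < a \<Longrightarrow> j < b \<Longrightarrow> l < c \<Longrightarrow> tvec a b c X (i + a * j + a * b * l) = X i j l"
  unfolding tvec_def by (simp only: idx_facts if_True)

lemma vec_sum:
  fixes f :: "nat \<Rightarrow> real"
  shows "(\<Sum>i<a. \<Sum>j<b. \<Sum>l<c. f (i + a * j + a * b * l)) = (\<Sum>t<a * b * c. f t)"
proof -
  have "(\<Sum>i<a. \<Sum>j<b. \<Sum>l<c. f (i + a * j + a * b * l)) = (\<Sum>(i,j,l)\<in>{..<a}\<times>{..<b}\<times>{..<c}. f (i + a * j + a * b * l))"
    by (simp add: sum.cartesian_product)
  also have "\<dots> = (\<Sum>t<a * b * c. f t)"
    apply (rule sum.reindex_bij_witness[where j = "\<lambda>(i,j,l). i + a * j + a * b * l"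
                                           and i = "\<lambda>t. (t mod a, (t div a) mod b, t div (a * b))"])
    by (auto simp: idx_facts idx_inv idx_range idx_small)
  finally show ?thesis .
qed

lemma tip_vec: "tip a b c X Z = (\<Sum>t<a * b * c. tvec a b c X t * tvec a b c Z t)"
proof -
  have "tip a b c X Z = (\<Sum>i<a. \<Sum>j<b. \<Sum>l<c. tvec a b c X (i + a * j + a * b * l) * tvec a b c Z (i + a * j + a * b * l))"
    unfolding tip_def by (intro sum.cong refl) (simp add: tvec_idx)
  also have "\<dots> = (\<Sum>t<a * b * c. tvec a b c X t * tvec a b c Z t)" by (rule vec_sum)
  finally show ?thesis .
qed

lemma tvec_tunvec: "tvec a b c (tunvec a b c v) t = (if t < a * b * c then v t else 0)"
  by (auto simp: tvec_def tunvec_def idx_range idx_inv)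

definition Kmat :: "nat \<Rightarrow> nat \<Rightarrow> rmat \<Rightarrow> rmat \<Rightarrow> rmat" where
  "Kmat N m phi phiinv = mmul N m N phiinv phi"

lemma tvec_P:
  "tvec a b c (proj_op a b c m phi phiinv X) t =
     (if t < a * b * c then (\<Sum>s<a * b * c. Kmat (a*b*c) m phi phiinv t s * tvec a b c X s) else 0)"
  by (simp add: proj_op_def Phi_inv_op_def Phi_op_def tvec_tunvec mvmul_def Kmat_def mmul_def
      sum_distrib_left sum_distrib_right mult.assoc sum.swap[where A="{..<m}"])

lemma tip_P_vec: "tip a b c (proj_op a b c m phi phiinv X) Z =
    (\<Sum>t<a * b * c. \<Sum>s<a * b * c. Kmat (a*b*c) m phi phiinv t s * tvec a b c X s * tvec a b c Z t)"
  by (simp add: tip_vec tvec_P sum_distrib_right mult.assoc)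

lemma P_selfadj:
  assumes mp: "is_mp_inverse m (a * b * c) phi phiinv"
  shows "tip a b c (proj_op a b c m phi phiinv X) Z = tip a b c X (proj_op a b c m phi phiinv Z)"
proof -
  let ?N = "a * b * c" and ?K = "Kmat (a*b*c) m phi phiinv"
  have sym: "?K t s = ?K s t" for t s using mp by (simp add: is_mp_inverse_def Kmat_def)
  have "tip a b c (proj_op a b c m phi phiinv X) Z = (\<Sum>t<?N. \<Sum>s<?N. ?K t s * tvec a b c X s * tvec a b c Z t)"
    by (rule tip_P_vec)
  also have "\<dots> = (\<Sum>s<?N. \<Sum>t<?N. ?K s t * tvec a b c Z t * tvec a b c X s)"
    by (subst sum.swap) (intro sum.cong refl, subst sym, simp add: mult_ac)
  also have "\<dots> = tip a b c (proj_op a b c m phi phiinv Z) X" by (rule tip_P_vec[symmetric])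
  also have "\<dots> = tip a b c X (proj_op a b c m phi phiinv Z)" by (simp add: tip_def mult.commute)
  finally show ?thesis .
qed

lemma K_idem:
  assumes mp: "is_mp_inverse m N phi phiinv" and t: "t < N" and u: "u < N"
  shows "(\<Sum>s<N. Kmat N m phi phiinv t s * Kmat N m phi phiinv s u) = Kmat N m phi phiinv t u"
proof -
  have CB: "mmul N N m (mmul N m N phiinv phi) phiinv = phiinv" using mp by (simp add: is_mp_inverse_def)
  have "(\<Sum>s<N. Kmat N m phi phiinv t s * Kmat N m phi phiinv s u)
      = (\<Sum>s<N. Kmat N m phi phiinv t s * (\<Sum>k<m. phiinv s k * phi k u))"
    using t u by (simp add: Kmat_def mmul_def)
  also have "\<dots> = (\<Sum>k<m. (\<Sum>s<N. Kmat N m phi phiinv t s * phiinv s k) * phi k u)"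
    by (simp add: sum_distrib_left sum_distrib_right mult.assoc sum.swap[where A="{..<N}"])
  also have "\<dots> = (\<Sum>k<m. phiinv t k * phi k u)"
  proof (intro sum.cong refl)
    fix k assume k: "k \<in> {..<m}"
    have "(\<Sum>s<N. Kmat N m phi phiinv t s * phiinv s k) = mmul N N m (mmul N m N phiinv phi) phiinv t k"
      using t k by (simp add: Kmat_def mmul_def)
    then show "(\<Sum>s<N. Kmat N m phi phiinv t s * phiinv s k) * phi k u = phiinv t k * phi k u"
      using CB by simp
  qed
  also have "\<dots> = Kmat N m phi phiinv t u" using t u by (simp add: Kmat_def mmul_def)
  finally show ?thesis .
qed

lemma P_idem:
  assumes mp: "is_mp_inverse m (a * b * c) phi phiinv"
  shows "proj_op a b c m phi phiinv (proj_op a b c m phi phiinv X) = proj_op a b c m phi phiinv X"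
proof -
  let ?N = "a * b * c" and ?K = "Kmat (a*b*c) m phi phiinv"
  have "tvec a b c (proj_op a b c m phi phiinv (proj_op a b c m phi phiinv X)) t =
        tvec a b c (proj_op a b c m phi phiinv X) t" for t
  proof (cases "t < ?N")
    case True
    have "tvec a b c (proj_op a b c m phi phiinv (proj_op a b c m phi phiinv X)) t
        = (\<Sum>s<?N. ?K t s * (\<Sum>u<?N. ?K s u * tvec a b c X u))"
      using True by (subst tvec_P) (simp add: tvec_P)
    also have "\<dots> = (\<Sum>u<?N. (\<Sum>s<?N. ?K t s * ?K s u) * tvec a b c X u)"
      by (simp only: sum_distrib_left sum_distrib_right mult.assoc) (rule sum.swap)
    also have "\<dots> = (\<Sum>u<?N. ?K t u * tvec a b c X u)"
      using True by (intro sum.cong refl) (simp add: K_idem[OF mp])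
    finally show ?thesis using True by (simp add: tvec_P)
  qed (simp add: tvec_P)
  then have f1: "tvec a b c (proj_op a b c m phi phiinv (proj_op a b c m phi phiinv X)) = tvec a b c (proj_op a b c m phi phiinv X)"
    by (rule ext)
  have f2: "proj_op a b c m phi phiinv Y = tunvec a b c (tvec a b c (proj_op a b c m phi phiinv Y))" for Y
    by (simp add: tvec_idx fun_eq_iff tunvec_def[of a b c "tvec a b c (proj_op a b c m phi phiinv Y)"])
       (simp add: proj_op_def Phi_inv_op_def tunvec_def)
  have "proj_op a b c m phi phiinv (proj_op a b c m phi phiinv X) = tunvec a b c (tvec a b c (proj_op a b c m phi phiinv (proj_op a b c m phi phiinv X)))"
    by (rule f2)
  also have "\<dots> = tunvec a b c (tvec a b c (proj_op a b c m phi phiinv X))" by (simp only: f1)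
  also have "\<dots> = proj_op a b c m phi phiinv X" by (rule f2[symmetric])
  finally show ?thesis .
qed

lemma P_kernel: "proj_op a b c m phi phiinv X = (\<lambda>x y z. if x < a \<and> y < b \<and> z < c then
    (\<Sum>s<a * b * c. Kmat (a*b*c) m phi phiinv (x + a * y + a * b * z) s * tvec a b c X s) else 0)"
proof (intro ext)
  fix x y z
  show "proj_op a b c m phi phiinv X x y z = (if x < a \<and> y < b \<and> z < c then
    (\<Sum>s<a * b * c. Kmat (a*b*c) m phi phiinv (x + a * y + a * b * z) s * tvec a b c X s) else 0)"
  proof (cases "x < a \<and> y < b \<and> z < c")
    case True
    then have r: "x + a * y + a * b * z < a * b * c" using idx_facts(1)[of x a y b z c] by blast
    have "proj_op a b c m phi phiinv X x y z = tvec a b c (proj_op a b c m phi phiinv X) (x + a * y + a * b * z)"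
      using True by (simp add: tvec_idx)
    also have "\<dots> = (\<Sum>s<a * b * c. Kmat (a*b*c) m phi phiinv (x + a * y + a * b * z) s * tvec a b c X s)"
      by (simp only: tvec_P r if_True)
    finally show ?thesis using True by simp
  next
    case False then show ?thesis by (auto simp: proj_op_def Phi_inv_op_def tunvec_def)
  qed
qed

lemma tvec_tdiff: "tvec a b c (tdiff X Z) t = tvec a b c X t - tvec a b c Z t"
  by (simp add: tvec_def tdiff_def)
lemma tvec_comb: "tvec a b c (\<lambda>x y z. u * X x y z + v * Z x y z) t = u * tvec a b c X t + v * tvec a b c Z t"
  by (simp add: tvec_def)
lemma tvec_sum: "tvec a b c (\<lambda>x y z. \<Sum>i\<in>I. F i x y z) t = (\<Sum>i\<in>I. tvec a b c (F i) t)"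
  by (simp add: tvec_def)

lemma P_diff: "proj_op a b c m phi phiinv (tdiff X Z) = tdiff (proj_op a b c m phi phiinv X) (proj_op a b c m phi phiinv Z)"
  unfolding P_kernel tvec_tdiff by (auto simp: tdiff_def fun_eq_iff right_diff_distrib sum_subtractf)

lemma P_comb: "proj_op a b c m phi phiinv (\<lambda>x y z. u * X x y z + v * Z x y z)
   = (\<lambda>x y z. u * proj_op a b c m phi phiinv X x y z + v * proj_op a b c m phi phiinv Z x y z)"
proof (intro ext)
  fix x y z
  show "proj_op a b c m phi phiinv (\<lambda>x y z. u * X x y z + v * Z x y z) x y z
     = u * proj_op a b c m phi phiinv X x y z + v * proj_op a b c m phi phiinv Z x y z"
  proof (cases "x < a \<and> y < b \<and> z < c")
    case True then show ?thesis
      unfolding P_kernel by (simp add: tvec_comb distrib_left sum.distrib sum_distrib_left mult.left_commute)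
  next
    case False then show ?thesis unfolding P_kernel by auto
  qed
qed

lemma P_sum: "proj_op a b c m phi phiinv (\<lambda>x y z. \<Sum>i\<in>I. F i x y z)
   = (\<lambda>x y z. \<Sum>i\<in>I. proj_op a b c m phi phiinv (F i) x y z)"
proof (intro ext)
  fix x y z
  show "proj_op a b c m phi phiinv (\<lambda>x y z. \<Sum>i\<in>I. F i x y z) x y z = (\<Sum>i\<in>I. proj_op a b c m phi phiinv (F i) x y z)"
  proof (cases "x < a \<and> y < b \<and> z < c")
    case True then show ?thesis
      unfolding P_kernel by (simp add: tvec_sum sum_distrib_left) (rule sum.swap)
  next
    case False then show ?thesis unfolding P_kernel by auto
  qed
qed



lemma root_sum:
  assumes c: "0 < c" and q: "q < c" and q': "q' < c"
  shows "(\<Sum>l<c. cis (2 * pi * real l * (real q' - real q) / real c)) = (if q = q' then of_nat c else 0)"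
proof (cases "q = q'")
  case True then show ?thesis by simp
next
  case False
  define w where "w = cis (2 * pi * (real q' - real q) / real c)"
  have pw: "cis (2 * pi * real l * (real q' - real q) / real c) = w ^ l" for l
    by (simp add: w_def DeMoivre mult.commute mult.left_commute)
  have wc: "w ^ c = 1"
  proof -
    have "w ^ c = cis (2 * pi * (real q' - real q))" using c by (simp add: w_def DeMoivre)
    also have "\<dots> = 1" by (rule cis_multiple_2pi) (simp add: Ints_diff)
    finally show ?thesis .
  qed
  have w1: "w \<noteq> 1"
  proof
    assume "w = 1"
    then have "Re w = 1" by simp
    then have "cos (2 * pi * (real q' - real q) / real c) = 1"
      by (simp add: w_def)
    then obtain n :: int where n: "2 * pi * (real q' - real q) / real c = n * 2 * pi"
      by (auto simp: cos_one_2pi_int)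
    then have "pi * (2 * (real q' - real q)) = pi * (2 * (n * real c))" using c by (simp add: field_simps)
    then have "real q' - real q = n * real c" using pi_gt_zero by simp
    then have e: "int q' - int q = n * int c"
      by (metis of_int_eq_iff of_int_mult of_int_of_nat_eq of_int_diff)
    show False
    proof (cases "n = 0")
      case True then show False using e False by simp
    next
      case nz: False
      then have "\<bar>n * int c\<bar> \<ge> int c" using c by (simp add: abs_mult)
      moreover have "\<bar>int q' - int q\<bar> < int c" using q q' by simp
      ultimately show False using e by simp
    qed
  qed
  have "(\<Sum>l<c. cis (2 * pi * real l * (real q' - real q) / real c)) = (\<Sum>l<c. w ^ l)"
    by (simp add: pw)
  also have "\<dots> = 0" using w1 wc by (simp add: geometric_sum)
  finally show ?thesis using False by simp
qed

lemma parseval: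
  assumes c: "0 < c"
  shows "(\<Sum>l<c. (cmod (dft3 c X i j l))\<^sup>2) = real c * (\<Sum>q<c. (X i j q)\<^sup>2)"
proof -
  let ?a = "\<lambda>l q. complex_of_real (X i j q) * cis (- 2 * pi * real l * real q / real c)"
  have "complex_of_real (\<Sum>l<c. (cmod (dft3 c X i j l))\<^sup>2) = (\<Sum>l<c. dft3 c X i j l * cnj (dft3 c X i j l))"
    by (simp only: of_real_sum complex_norm_square)
  also have "\<dots> = (\<Sum>l<c. \<Sum>q<c. \<Sum>q'<c. complex_of_real (X i j q * X i j q') * cis (2 * pi * real l * (real q' - real q) / real c))"
  proof (rule sum.cong[OF refl])
    fix l
    have "dft3 c X i j l * cnj (dft3 c X i j l) = (\<Sum>q<c. \<Sum>q'<c. ?a l q * cnj (?a l q'))"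
      by (simp add: dft3_def sum_product)
    also have "\<dots> = (\<Sum>q<c. \<Sum>q'<c. complex_of_real (X i j q * X i j q') * cis (2 * pi * real l * (real q' - real q) / real c))"
    proof (intro sum.cong refl)
      fix q q'
      have "?a l q * cnj (?a l q') = complex_of_real (X i j q * X i j q') * (cis (- 2 * pi * real l * real q / real c) * cis (-(- 2 * pi * real l * real q' / real c)))"
        by (simp add: cis_cnj)
      also have "cis (- 2 * pi * real l * real q / real c) * cis (-(- 2 * pi * real l * real q' / real c)) = cis (2 * pi * real l * (real q' - real q) / real c)"
        by (simp add: cis_mult algebra_simps add_divide_distrib[symmetric] diff_divide_distrib[symmetric])
      finally show "?a l q * cnj (?a l q') = complex_of_real (X i j q * X i j q') * cis (2 * pi * real l * (real q' - real q) / real c)" .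
    qed
    finally show "dft3 c X i j l * cnj (dft3 c X i j l) = (\<Sum>q<c. \<Sum>q'<c. complex_of_real (X i j q * X i j q') * cis (2 * pi * real l * (real q' - real q) / real c))" .
  qed
  also have "\<dots> = (\<Sum>q<c. \<Sum>q'<c. complex_of_real (X i j q * X i j q') * (\<Sum>l<c. cis (2 * pi * real l * (real q' - real q) / real c)))"
    unfolding sum_distrib_left by (rule swap3)
  also have "\<dots> = (\<Sum>q<c. \<Sum>q'<c. if q = q' then complex_of_real (X i j q * X i j q') * of_nat c else 0)"
    using c by (intro sum.cong refl) (simp add: root_sum)
  also have "\<dots> = complex_of_real (real c * (\<Sum>q<c. (X i j q)\<^sup>2))"
    by (simp add: sum.delta sum_distrib_left power2_eq_square mult.commute)
  finally show ?thesis by (simp only: of_real_eq_iff)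
qed

lemma tube_le_first:
  assumes c: "0 < c" and sv: "is_tsvd a b c R U S V" and j: "j < min a b"
  shows "(\<Sum>l<c. (S j j l)\<^sup>2) \<le> (\<Sum>l<c. (S 0 0 l)\<^sup>2)"
proof -
  from sv have nn: "\<And>l j. l < c \<Longrightarrow> j < min a b \<Longrightarrow> Im (dft3 c S j j l) = 0 \<and> 0 \<le> Re (dft3 c S j j l)"
    and mono: "\<And>l j. l < c \<Longrightarrow> Suc j < min a b \<Longrightarrow> Re (dft3 c S (Suc j) (Suc j) l) \<le> Re (dft3 c S j j l)"
    by (auto simp: is_tsvd_def)
  have le: "Re (dft3 c S j j l) \<le> Re (dft3 c S 0 0 l)" if "l < c" "j < min a b" for l j
    using that(2)
  proof (induction j)
    case 0 then show ?case by simp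
  next
    case (Suc j) then show ?case using mono[OF that(1), of j] by simp
  qed
  have "(\<Sum>l<c. (cmod (dft3 c S j j l))\<^sup>2) \<le> (\<Sum>l<c. (cmod (dft3 c S 0 0 l))\<^sup>2)"
  proof (rule sum_mono)
    fix l assume "l \<in> {..<c}"
    then have l: "l < c" by simp
    have j0: "0 < min a b" using j by simp
    show "(cmod (dft3 c S j j l))\<^sup>2 \<le> (cmod (dft3 c S 0 0 l))\<^sup>2"
      using nn[OF l j] nn[OF l j0] le[OF l j] by (simp add: cmod_power2 power_mono)
  qed
  then have "real c * (\<Sum>l<c. (S j j l)\<^sup>2) \<le> real c * (\<Sum>l<c. (S 0 0 l)\<^sup>2)"
    by (simp add: parseval[OF c])
  then show ?thesis using c by simp
qed



lemma P_zero: "proj_op a b c m phi phiinv zero_tensor = zero_tensor"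
  unfolding P_kernel by (simp add: tvec_def zero_tensor_def fun_eq_iff)

lemma fix_scale: "proj_op a b c m phi phiinv Z = Z \<Longrightarrow>
   proj_op a b c m phi phiinv (\<lambda>x y z. u * Z x y z) = (\<lambda>x y z. u * Z x y z)"
  using P_comb[of a b c m phi phiinv u Z 0 Z] by simp

lemma fix_add: "proj_op a b c m phi phiinv Z = Z \<Longrightarrow> proj_op a b c m phi phiinv W = W \<Longrightarrow>
   proj_op a b c m phi phiinv (\<lambda>x y z. Z x y z + W x y z) = (\<lambda>x y z. Z x y z + W x y z)"
  using P_comb[of a b c m phi phiinv 1 Z 1 W] by simp

lemma fix_sum: "(\<And>i. i \<in> I \<Longrightarrow> proj_op a b c m phi phiinv (F i) = F i) \<Longrightarrow>
   proj_op a b c m phi phiinv (\<lambda>x y z. \<Sum>i\<in>I. F i x y z) = (\<lambda>x y z. \<Sum>i\<in>I. F i x y z)"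
  by (simp add: P_sum)

lemma tip_sym: "tip a b c X Z = tip a b c Z X"
  by (simp add: tip_def mult.commute)

lemma tip_nonneg: "0 \<le> tip a b c X X"
  by (simp add: tip_def sum_nonneg)

lemma tip_diff_left: "tip a b c (\<lambda>x y z. A x y z - u * B x y z) C = tip a b c A C - u * tip a b c B C"
  by (simp add: tip_def left_diff_distrib sum_subtractf sum_distrib_left mult.assoc)

lemma tip_expand: "tip a b c (\<lambda>x y z. A x y z - u * B x y z) (\<lambda>x y z. A x y z - u * B x y z)
   = tip a b c A A - 2 * u * tip a b c A B + u\<^sup>2 * tip a b c B B"
proof -
  have "tip a b c (\<lambda>x y z. A x y z - u * B x y z) (\<lambda>x y z. A x y z - u * B x y z)
     = tip a b c A (\<lambda>x y z. A x y z - u * B x y z) - u * tip a b c B (\<lambda>x y z. A x y z - u * B x y z)"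
    by (rule tip_diff_left)
  also have "tip a b c A (\<lambda>x y z. A x y z - u * B x y z) = tip a b c A A - u * tip a b c B A"
    by (subst tip_sym) (rule tip_diff_left)
  also have "tip a b c B (\<lambda>x y z. A x y z - u * B x y z) = tip a b c A B - u * tip a b c B B"
    by (subst tip_sym) (rule tip_diff_left)
  also have "tip a b c B A = tip a b c A B" by (rule tip_sym)
  finally show ?thesis by (simp add: power2_eq_square algebra_simps)
qed

lemma fro_sq: "(fro a b c Z)\<^sup>2 = tip a b c Z Z"
  by (simp add: fro_def tip_def power2_eq_square[symmetric] sum_nonneg)

lemma fro_tip: "fro a b c Z = sqrt (tip a b c Z Z)"
  by (simp add: fro_def tip_def power2_eq_square)

lemma tip_tdiff_swap: "tip a b c (tdiff A B) (tdiff A B) = tip a b c (tdiff B A) (tdiff B A)"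
  by (simp add: tip_def tdiff_def algebra_simps)

lemma PM_le:
  assumes mp: "is_mp_inverse m (a * b * c) phi phiinv"
  shows "tip a b c (proj_op a b c m phi phiinv M) (proj_op a b c m phi phiinv M) \<le> tip a b c M M"
proof -
  let ?P = "proj_op a b c m phi phiinv"
  have e: "tip a b c (?P M) (?P M) = tip a b c (?P M) M"
    using P_selfadj[OF mp, of "?P M" M] P_idem[OF mp, of M] by simp
  have "0 \<le> tip a b c (\<lambda>x y z. M x y z - 1 * ?P M x y z) (\<lambda>x y z. M x y z - 1 * ?P M x y z)"
    by (rule tip_nonneg)
  also have "\<dots> = tip a b c M M - 2 * tip a b c M (?P M) + tip a b c (?P M) (?P M)"
    using tip_expand[of a b c M 1 "?P M"] by simp
  finally show ?thesis using e tip_sym[of a b c M "?P M"] by simp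
qed

lemma key_step:
  assumes a: "0 < a" and b: "0 < b" and c: "0 < c"
    and mp: "is_mp_inverse m (a * b * c) phi phiinv"
    and sv: "is_tsvd a b c Rk Uk Sk Vk"
    and fixR: "proj_op a b c m phi phiinv Rk = Rk"
    and opt: "tip a b c Rn Rn \<le> tip a b c
        (\<lambda>x y z. Rk x y z - tube_norm c Sk 0 * proj_op a b c m phi phiinv (rank1_term a b c Uk Sk Vk 0) x y z)
        (\<lambda>x y z. Rk x y z - tube_norm c Sk 0 * proj_op a b c m phi phiinv (rank1_term a b c Uk Sk Vk 0) x y z)"
  shows "tip a b c Rn Rn \<le> (1 - 1 / real (min a b)) * tip a b c Rk Rk"
proof -
  let ?P = "proj_op a b c m phi phiinv"
  define M where "M = rank1_term a b c Uk Sk Vk 0"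
  define \<sigma> where "\<sigma> = tube_norm c Sk 0"
  have s2: "\<sigma>\<^sup>2 = (\<Sum>l<c. (Sk 0 0 l)\<^sup>2)"
    unfolding \<sigma>_def tube_norm_def by (simp add: sum_nonneg)
  have inner: "tip a b c Rk (?P M) = \<sigma>"
  proof -
    have "tip a b c Rk (?P M) = tip a b c (?P Rk) M" by (rule P_selfadj[OF mp, symmetric])
    also have "\<dots> = tip a b c Rk M" using fixR by simp
    also have "\<dots> = \<sigma>" unfolding M_def \<sigma>_def by (rule inner_M[OF a b c sv])
    finally show ?thesis .
  qed
  have pm: "tip a b c (?P M) (?P M) \<le> 1"
    using PM_le[OF mp, of M] norm_M[OF a b c sv] unfolding M_def by linarith
  from sv have U: "is_tensor a a c Uk" "t_orthogonal a c Uk" and S: "is_tensor a b c Sk" "f_diagonal Sk"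
    and V: "is_tensor b b c Vk" "t_orthogonal b c Vk"
    and R: "Rk = tprod a a b c Uk (tprod a b b c Sk (ctrans b b c Vk))"
    by (auto simp: is_tsvd_def)
  have "tip a b c Rk Rk = tip a b c (tprod a b b c Sk (ctrans b b c Vk)) (tprod a b b c Sk (ctrans b b c Vk))"
    unfolding R by (rule norm_pres_left[OF c U(2) tprod_is_tensor])
  also have "\<dots> = tip a b c Sk Sk" by (rule norm_pres_right[OF c V(2) V(1) S(1)])
  also have "\<dots> = (\<Sum>j<min a b. \<Sum>l<c. (Sk j j l)\<^sup>2)" by (rule tip_fdiag[OF S(2)])
  also have "\<dots> \<le> (\<Sum>j<min a b. \<Sum>l<c. (Sk 0 0 l)\<^sup>2)"
    by (rule sum_mono) (rule tube_le_first[OF c sv], simp)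
  also have "\<dots> = real (min a b) * \<sigma>\<^sup>2" by (simp add: s2)
  finally have nr: "tip a b c Rk Rk \<le> real (min a b) * \<sigma>\<^sup>2" .
  have "tip a b c Rn Rn \<le> tip a b c Rk Rk - 2 * \<sigma> * tip a b c Rk (?P M) + \<sigma>\<^sup>2 * tip a b c (?P M) (?P M)"
    using opt unfolding M_def[symmetric] \<sigma>_def[symmetric] tip_expand .
  also have "\<dots> \<le> tip a b c Rk Rk - \<sigma>\<^sup>2"
  proof -
    have "\<sigma>\<^sup>2 * tip a b c (?P M) (?P M) \<le> \<sigma>\<^sup>2 * 1" using pm by (intro mult_left_mono) auto
    then show ?thesis unfolding inner by (simp add: power2_eq_square)
  qed
  also have "\<dots> \<le> (1 - 1 / real (min a b)) * tip a b c Rk Rk"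
  proof -
    have n: "0 < real (min a b)" using a b by simp
    have "tip a b c Rk Rk / real (min a b) \<le> \<sigma>\<^sup>2" using nr n by (simp add: divide_le_eq mult.commute)
    then show ?thesis by (simp add: algebra_simps)
  qed
  finally show ?thesis .
qed



lemma fix_std:
  assumes mp: "is_mp_inverse m (a * b * c) phi phiinv"
  shows "proj_op a b c m phi phiinv (std_comb k s (proj_op a b c m phi phiinv) M th) = std_comb k s (proj_op a b c m phi phiinv) M th"
  unfolding std_comb_def
  by (intro fix_sum fix_scale P_idem[OF mp])

lemma fix_econ:
  assumes mp: "is_mp_inverse m (a * b * c) phi phiinv"
    and fx: "proj_op a b c m phi phiinv Xp = Xp"
  shows "proj_op a b c m phi phiinv (econ_comb s (proj_op a b c m phi phiinv) Xp Mk al) = econ_comb s (proj_op a b c m phi phiinv) Xp Mk al"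
  unfolding econ_comb_def
  by (intro fix_add fix_sum fix_scale P_idem[OF mp] fx)

lemma sum_first: "0 < (s::nat) \<Longrightarrow> (\<Sum>j<s. (if j = 0 then u else 0) * f j) = (u::real) * f 0"
proof -
  assume s: "0 < s"
  have "(\<Sum>j<s. (if j = 0 then u else 0) * f j) = (\<Sum>j<s. if j = 0 then u * f j else 0)"
    by (intro sum.cong refl) simp
  also have "\<dots> = u * f 0" using s by (simp add: sum.delta)
  finally show ?thesis .
qed

theorem theorem3p1:
  fixes n1 n2 n3 m r s N :: nat
    and phi phiinv :: rmat and Y :: tensor
    and R X U S V :: "nat \<Rightarrow> tensor"
    and th :: "nat \<Rightarrow> nat \<Rightarrow> nat \<Rightarrow> real" and al :: "nat \<Rightarrow> nat \<Rightarrow> real"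
    and econ :: bool
  assumes dims: "0 < n1" "0 < n2" "0 < n3"
    and Y: "is_tensor n1 n2 n3 Y" "tubal_rank_le n1 n2 n3 Y r"
    and phi: "is_matrix m (n1 * n2 * n3) phi" "full_row_rank m (n1 * n2 * n3) phi"
    and phiinv: "is_mp_inverse m (n1 * n2 * n3) phi phiinv"
    and s: "1 \<le> s"
    and N: "N \<le> nat \<lceil>real r / real s\<rceil>"
    and run: "lrap_run econ n1 n2 n3 m phi phiinv Y s N R X U S V th al"
  shows "\<forall>k. 1 \<le> k \<and> k \<le> Suc N \<longrightarrow>
           fro n1 n2 n3 (R k)
             \<le> sqrt (1 - 1 / real (min n1 n2)) ^ (k - 1)
                * fro n1 n2 n3 (Phi_inv_op n1 n2 n3 m phiinv (Phi_op n1 n2 n3 m phi Y))"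
proof -
  let ?P = "proj_op n1 n2 n3 m phi phiinv"
  let ?R0 = "?P Y"
  let ?M = "\<lambda>i j. rank1_term n1 n2 n3 (U i) (S i) (V i) j"
  note run' = run[unfolded lrap_run_def Let_def]
  have R1: "R 1 = ?R0" and X0: "X 0 = zero_tensor" using run' by blast+
  have st: "is_tsvd n1 n2 n3 (R k) (U k) (S k) (V k) \<and>
           (if econ then
              X k = econ_comb s ?P (X (k - 1)) (?M k) (al k) \<and>
              (\<forall>al'. (fro n1 n2 n3 (tdiff (X k) ?R0))\<^sup>2
                        \<le> (fro n1 n2 n3 (tdiff (econ_comb s ?P (X (k - 1)) (?M k) al') ?R0))\<^sup>2)
            else
              X k = std_comb k s ?P ?M (th k) \<and>
              (\<forall>th'. (fro n1 n2 n3 (tdiff (X k) ?R0))\<^sup>2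
                        \<le> (fro n1 n2 n3 (tdiff (std_comb k s ?P ?M th') ?R0))\<^sup>2)) \<and>
           R (Suc k) = tdiff ?R0 (X k)" if "1 \<le> k" "k \<le> N" for k
    using run' that by blast
  have fixX: "?P (X k) = X k" if "k \<le> N" for k
    using that
  proof (induction k)
    case 0 then show ?case using X0 by (simp add: P_zero)
  next
    case (Suc k)
    have stk: "if econ then X (Suc k) = econ_comb s ?P (X k) (?M (Suc k)) (al (Suc k))
               else X (Suc k) = std_comb (Suc k) s ?P ?M (th (Suc k))"
      using st[of "Suc k"] Suc.prems by (simp split: if_splits)
    show ?case
    proof (cases econ)
      case True
      then have "X (Suc k) = econ_comb s ?P (X k) (?M (Suc k)) (al (Suc k))" using stk by simp
      then show ?thesis using fix_econ[OF phiinv Suc.IH] Suc.prems by simp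
    next
      case False
      then have "X (Suc k) = std_comb (Suc k) s ?P ?M (th (Suc k))" using stk by simp
      then show ?thesis using fix_std[OF phiinv] by simp
    qed
  qed
  have Rk: "R k = tdiff ?R0 (X (k - 1))" if "1 \<le> k" "k \<le> N" for k
  proof (cases "k = 1")
    case True then show ?thesis using R1 X0 by (simp add: tdiff_def zero_tensor_def)
  next
    case False
    then have "R (Suc (k - 1)) = tdiff ?R0 (X (k - 1))" using st[of "k - 1"] that by simp
    then show ?thesis using that by simp
  qed
  have fixR: "?P (R k) = R k" if "1 \<le> k" "k \<le> N" for k
    using Rk[OF that] fixX[of "k - 1"] that by (simp add: P_diff P_idem[OF phiinv])
  have stepk: "tip n1 n2 n3 (R (Suc k)) (R (Suc k)) \<le> (1 - 1 / real (min n1 n2)) * tip n1 n2 n3 (R k) (R k)"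
    if k: "1 \<le> k" "k \<le> N" for k
  proof -
    define \<sigma> where "\<sigma> = tube_norm n3 (S k) 0"
    define D where "D = (\<lambda>x y z. R k x y z - \<sigma> * ?P (?M k 0) x y z)"
    have sv: "is_tsvd n1 n2 n3 (R k) (U k) (S k) (V k)" and RS: "R (Suc k) = tdiff ?R0 (X k)"
      using st[OF k] by blast+
    have Xprev: "(\<lambda>x y z. X (k - 1) x y z) = X (k - 1)" by simp
    obtain cand where cand: "tdiff ?R0 cand = D"
      and copt: "(fro n1 n2 n3 (tdiff (X k) ?R0))\<^sup>2 \<le> (fro n1 n2 n3 (tdiff cand ?R0))\<^sup>2"
    proof (cases econ)
      case True
      define al' where "al' = (\<lambda>j::nat. if j = 0 then 1 else if j = Suc 0 then \<sigma> else 0)"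
      have c1: "econ_comb s ?P (X (k - 1)) (?M k) al' = (\<lambda>x y z. X (k - 1) x y z + \<sigma> * ?P (?M k 0) x y z)"
      proof (intro ext)
        fix x y z
        have "(\<Sum>j<s. al' (Suc j) * ?P (?M k j) x y z) = (\<Sum>j<s. (if j = 0 then \<sigma> else 0) * ?P (?M k j) x y z)"
          by (intro sum.cong refl) (simp add: al'_def)
        also have "\<dots> = \<sigma> * ?P (?M k 0) x y z" using s by (intro sum_first) simp
        finally show "econ_comb s ?P (X (k - 1)) (?M k) al' x y z = X (k - 1) x y z + \<sigma> * ?P (?M k 0) x y z"
          by (simp add: econ_comb_def al'_def)
      qed
      have "tdiff ?R0 (econ_comb s ?P (X (k - 1)) (?M k) al') = D"
        unfolding c1 D_def Rk[OF k] by (simp add: tdiff_def fun_eq_iff)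
      moreover have "(fro n1 n2 n3 (tdiff (X k) ?R0))\<^sup>2 \<le> (fro n1 n2 n3 (tdiff (econ_comb s ?P (X (k - 1)) (?M k) al') ?R0))\<^sup>2"
        using st[OF k] True by auto
      ultimately show ?thesis by (rule that)
    next
      case False
      define th' where "th' = (\<lambda>i j::nat. if i = k then (if j = 0 then \<sigma> else 0) else th (k - 1) i j)"
      have prevX: "(\<Sum>i\<in>{1..k - 1}. \<Sum>j<s. th (k - 1) i j * ?P (?M i j) x y z) = X (k - 1) x y z" for x y z
      proof (cases "k = 1")
        case True then show ?thesis using X0 by (simp add: zero_tensor_def)
      next
        case k1: False
        then have "X (k - 1) = std_comb (k - 1) s ?P ?M (th (k - 1))"
          using st[of "k - 1"] k False by simp
        then show ?thesis by (simp add: std_comb_def)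
      qed
      have c1: "std_comb k s ?P ?M th' = (\<lambda>x y z. X (k - 1) x y z + \<sigma> * ?P (?M k 0) x y z)"
      proof (intro ext)
        fix x y z
        have ins: "{1..k} = insert k {1..k - 1}" using k by auto
        have "std_comb k s ?P ?M th' x y z = (\<Sum>j<s. th' k j * ?P (?M k j) x y z) + (\<Sum>i\<in>{1..k - 1}. \<Sum>j<s. th' i j * ?P (?M i j) x y z)"
          unfolding std_comb_def ins using k by (subst sum.insert) auto
        also have "(\<Sum>i\<in>{1..k - 1}. \<Sum>j<s. th' i j * ?P (?M i j) x y z) = (\<Sum>i\<in>{1..k - 1}. \<Sum>j<s. th (k - 1) i j * ?P (?M i j) x y z)"
          using k by (intro sum.cong refl) (auto simp: th'_def)
        also have "(\<Sum>j<s. th' k j * ?P (?M k j) x y z) = \<sigma> * ?P (?M k 0) x y z"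
          unfolding th'_def using s by (simp add: sum_first)
        finally show "std_comb k s ?P ?M th' x y z = X (k - 1) x y z + \<sigma> * ?P (?M k 0) x y z"
          using prevX by simp
      qed
      have "tdiff ?R0 (std_comb k s ?P ?M th') = D"
        unfolding c1 D_def Rk[OF k] by (simp add: tdiff_def fun_eq_iff)
      moreover have "(fro n1 n2 n3 (tdiff (X k) ?R0))\<^sup>2 \<le> (fro n1 n2 n3 (tdiff (std_comb k s ?P ?M th') ?R0))\<^sup>2"
        using st[OF k] False by auto
      ultimately show ?thesis by (rule that)
    qed
    have opt: "tip n1 n2 n3 (R (Suc k)) (R (Suc k)) \<le> tip n1 n2 n3 D D"
    proof -
      have "tip n1 n2 n3 (R (Suc k)) (R (Suc k)) = (fro n1 n2 n3 (tdiff (X k) ?R0))\<^sup>2"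
        unfolding RS fro_sq by (rule tip_tdiff_swap)
      also have "\<dots> \<le> (fro n1 n2 n3 (tdiff cand ?R0))\<^sup>2" by (rule copt)
      also have "\<dots> = tip n1 n2 n3 D D"
        unfolding fro_sq cand[symmetric] by (rule tip_tdiff_swap)
      finally show ?thesis .
    qed
    show ?thesis
      by (rule key_step[OF dims phiinv sv fixR[OF k]]) (use opt in \<open>simp add: D_def \<sigma>_def\<close>)
  qed
  define \<rho> where "\<rho> = sqrt (1 - 1 / real (min n1 n2))"
  have rho0: "0 \<le> \<rho>" unfolding \<rho>_def using dims by simp
  have main: "fro n1 n2 n3 (R k) \<le> \<rho> ^ (k - 1) * fro n1 n2 n3 (R 1)" if "1 \<le> k" "k \<le> Suc N" for k
    using that
  proof (induction k)
    case 0 then show ?case by simp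
  next
    case (Suc k)
    show ?case
    proof (cases "k = 0")
      case True then show ?thesis by simp
    next
      case False
      then have k: "1 \<le> k" "k \<le> N" using Suc.prems by auto
      have "fro n1 n2 n3 (R (Suc k)) = sqrt (tip n1 n2 n3 (R (Suc k)) (R (Suc k)))" by (rule fro_tip)
      also have "\<dots> \<le> sqrt ((1 - 1 / real (min n1 n2)) * tip n1 n2 n3 (R k) (R k))"
        using stepk[OF k] by simp
      also have "\<dots> = \<rho> * fro n1 n2 n3 (R k)"
        by (simp add: \<rho>_def fro_tip real_sqrt_mult)
      also have "\<dots> \<le> \<rho> * (\<rho> ^ (k - 1) * fro n1 n2 n3 (R 1))"
        using Suc.IH k rho0 by (intro mult_left_mono) auto
      also have "\<dots> = \<rho> ^ (Suc k - 1) * fro n1 n2 n3 (R 1)"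
        using k by (cases k) auto
      finally show ?thesis .
    qed
  qed
  have "R 1 = Phi_inv_op n1 n2 n3 m phiinv (Phi_op n1 n2 n3 m phi Y)"
    using R1 by (simp add: proj_op_def)
  then show ?thesis using main unfolding \<rho>_def by auto
qed


end
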